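(* Let $G$ be a finite simple graph that contains no induced subgraph isomorphic to a banner or to $C_5$. Suppose $G$ contains an odd antihole $A$ (as an induced subgraph) such that (i) $\alpha(G) \geq 3$, and (ii) no co-triangle of $G$ contains two vertices of $A$. Then the complement $\overline{G}$ of $G$ has a connected component $O$ that contains all vertices of $A$ and is triangle-free.
   Context: A hole is a chordless (induced) cycle with at least four vertices; it is odd if it has an odd number of vertices. An antihole is the complement of a hole; an odd antihole is the complement of an odd hole. $C_k$ denotes the chordless cycle on $k$ vertices. A banner is the graph consisting of a hole on four vertices together with one additional vertex adjacent to exactly one vertex of that hole. A co-triangle is a set of three pairwise non-adjacent vertices (the complement of a triangle). $\alpha(G)$ denotes the maximum size of a stable set of $G$. "Contains" means contains as an induced subgraph. *)

theory Defs
  imports Main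
begin

definition simple_graph :: "'a set \<Rightarrow> ('a \<Rightarrow> 'a \<Rightarrow> bool) \<Rightarrow> bool" where
  "simple_graph V E \<longleftrightarrow> finite V \<and> (\<forall>x y. E x y \<longrightarrow> x \<in> V \<and> y \<in> V \<and> x \<noteq> y \<and> E y x)"

definition compl_adj :: "'a set \<Rightarrow> ('a \<Rightarrow> 'a \<Rightarrow> bool) \<Rightarrow> 'a \<Rightarrow> 'a \<Rightarrow> bool" where
  "compl_adj V E x y \<longleftrightarrow> x \<in> V \<and> y \<in> V \<and> x \<noteq> y \<and> \<not> E x y"

definition induced_iso :: "('a \<Rightarrow> 'a \<Rightarrow> bool) \<Rightarrow> 'a set \<Rightarrow> 'b set \<Rightarrow> ('b \<Rightarrow> 'b \<Rightarrow> bool) \<Rightarrow> bool" where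
  "induced_iso E A VH EH \<longleftrightarrow>
     (\<exists>f. bij_betw f VH A \<and> (\<forall>x\<in>VH. \<forall>y\<in>VH. E (f x) (f y) \<longleftrightarrow> EH x y))"

definition contains_induced :: "'a set \<Rightarrow> ('a \<Rightarrow> 'a \<Rightarrow> bool) \<Rightarrow> 'b set \<Rightarrow> ('b \<Rightarrow> 'b \<Rightarrow> bool) \<Rightarrow> bool" where
  "contains_induced V E VH EH \<longleftrightarrow> (\<exists>A \<subseteq> V. induced_iso E A VH EH)"

definition cycle_adj :: "nat \<Rightarrow> nat \<Rightarrow> nat \<Rightarrow> bool" where
  "cycle_adj k i j \<longleftrightarrow> i < k \<and> j < k \<and> i \<noteq> j \<and> (j = (i + 1) mod k \<or> i = (j + 1) mod k)"

definition anticycle_adj :: "nat \<Rightarrow> nat \<Rightarrow> nat \<Rightarrow> bool" where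
  "anticycle_adj k i j \<longleftrightarrow> i < k \<and> j < k \<and> i \<noteq> j \<and> \<not> cycle_adj k i j"

definition banner_adj :: "nat \<Rightarrow> nat \<Rightarrow> bool" where
  "banner_adj i j \<longleftrightarrow> {i, j} \<in> {{0,1}, {1,2}, {2,3}, {3,0}, {0,4}}"

definition banner_V :: "nat set" where "banner_V = {0..<5}"

definition odd_antihole :: "'a set \<Rightarrow> ('a \<Rightarrow> 'a \<Rightarrow> bool) \<Rightarrow> 'a set \<Rightarrow> bool" where
  "odd_antihole V E A \<longleftrightarrow> A \<subseteq> V \<and>
     (\<exists>k. odd k \<and> k \<ge> 5 \<and> induced_iso E A {0..<k} (anticycle_adj k))"

definition stable_set :: "'a set \<Rightarrow> ('a \<Rightarrow> 'a \<Rightarrow> bool) \<Rightarrow> 'a set \<Rightarrow> bool" where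
  "stable_set V E S \<longleftrightarrow> S \<subseteq> V \<and> (\<forall>x\<in>S. \<forall>y\<in>S. \<not> E x y)"

definition co_triangle :: "'a set \<Rightarrow> ('a \<Rightarrow> 'a \<Rightarrow> bool) \<Rightarrow> 'a set \<Rightarrow> bool" where
  "co_triangle V E S \<longleftrightarrow> stable_set V E S \<and> card S = 3"

definition stability_number :: "'a set \<Rightarrow> ('a \<Rightarrow> 'a \<Rightarrow> bool) \<Rightarrow> nat" where
  "stability_number V E = Max {card S | S. stable_set V E S}"

definition conn_component :: "'a set \<Rightarrow> ('a \<Rightarrow> 'a \<Rightarrow> bool) \<Rightarrow> 'a set \<Rightarrow> bool" where
  "conn_component V R C \<longleftrightarrow> (\<exists>x\<in>V. C = {y \<in> V. (\<lambda>u v. R u v \<and> u \<in> V \<and> v \<in> V)\<^sup>*\<^sup>* x y})"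

definition triangle_free_on :: "('a \<Rightarrow> 'a \<Rightarrow> bool) \<Rightarrow> 'a set \<Rightarrow> bool" where
  "triangle_free_on R C \<longleftrightarrow> \<not> (\<exists>x\<in>C. \<exists>y\<in>C. \<exists>z\<in>C. R x y \<and> R y z \<and> R x z)"

end

theory Submission
  imports Defs
begin

lemma sg_sym: "simple_graph V E \<Longrightarrow> compl_adj V E u v \<Longrightarrow> compl_adj V E v u"
  unfolding simple_graph_def compl_adj_def by blast

lemma E_iff: "simple_graph V E \<Longrightarrow> u \<in> V \<Longrightarrow> v \<in> V \<Longrightarrow> u \<noteq> v \<Longrightarrow> E u v \<longleftrightarrow> \<not> compl_adj V E u v"
  unfolding simple_graph_def compl_adj_def by blast

lemma E_irr: "simple_graph V E \<Longrightarrow> \<not> E u u"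
  unfolding simple_graph_def by blast

lemma F_V: "compl_adj V E u v \<Longrightarrow> u \<in> V \<and> v \<in> V \<and> u \<noteq> v \<and> \<not> E u v"
  unfolding compl_adj_def by blast

lemma banner_tab:
  "banner_adj 0 1" "banner_adj 1 2" "banner_adj 2 3" "banner_adj 3 0" "banner_adj 0 4"
  "banner_adj 1 0" "banner_adj 2 1" "banner_adj 3 2" "banner_adj 0 3" "banner_adj 4 0"
  "\<not>banner_adj 0 0" "\<not>banner_adj 1 1" "\<not>banner_adj 2 2" "\<not>banner_adj 3 3" "\<not>banner_adj 4 4"
  "\<not>banner_adj 0 2" "\<not>banner_adj 2 0" "\<not>banner_adj 1 3" "\<not>banner_adj 3 1"
  "\<not>banner_adj 1 4" "\<not>banner_adj 4 1" "\<not>banner_adj 2 4" "\<not>banner_adj 4 2"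
  "\<not>banner_adj 3 4" "\<not>banner_adj 4 3"
  by (auto simp: banner_adj_def doubleton_eq_iff)

lemma cobanner:
  fixes V :: "'a set"
  assumes sg: "simple_graph V E" and nb: "\<not> contains_induced V E banner_V banner_adj"
  and F: "compl_adj V E t x" "compl_adj V E t y" "compl_adj V E x y" "compl_adj V E t a"
   "\<not> compl_adj V E a x" "\<not> compl_adj V E a y" "a \<noteq> x" "a \<noteq> y" "compl_adj V E a b"
   "\<not> compl_adj V E b t" "\<not> compl_adj V E b x" "\<not> compl_adj V E b y" "b \<noteq> t" "b \<noteq> x" "b \<noteq> y"
  shows False
proof -
  let ?xs = "[b,x,a,y,t]"
  have V: "t \<in> V" "x \<in> V" "y \<in> V" "a \<in> V" "b \<in> V" using F F_V by metis+
  have d: "distinct ?xs" using F unfolding compl_adj_def by auto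
  have Fs: "compl_adj V E x t" "compl_adj V E y t" "compl_adj V E y x" "compl_adj V E a t"
     "compl_adj V E b a" using F sg_sym[OF sg] by blast+
  have ns: "\<not> compl_adj V E x a" "\<not> compl_adj V E y a" "\<not> compl_adj V E t b" "\<not> compl_adj V E x b" "\<not> compl_adj V E y b"
    using F sg_sym[OF sg] by blast+
  have bij: "bij_betw ((!) ?xs) banner_V (set ?xs)"
    by (rule bij_betw_nth[OF d]) (auto simp: banner_V_def)
  have U: "banner_V = {0,1,2,3,4}" by (auto simp: banner_V_def)
  have "induced_iso E (set ?xs) banner_V banner_adj"
    unfolding induced_iso_def
    apply (rule exI[of _ "(!) ?xs"])
    apply (rule conjI[OF bij])
    unfolding U
    using F Fs ns d V E_iff[OF sg] E_irr[OF sg] banner_tab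
    by (simp; metis)
  moreover have "set ?xs \<subseteq> V" using V by auto
  ultimately show False using nb unfolding contains_induced_def by blast
qed


lemma cyc5_tab:
  "cycle_adj 5 0 1" "cycle_adj 5 1 2" "cycle_adj 5 2 3" "cycle_adj 5 3 4" "cycle_adj 5 4 0"
  "cycle_adj 5 1 0" "cycle_adj 5 2 1" "cycle_adj 5 3 2" "cycle_adj 5 4 3" "cycle_adj 5 0 4"
  "\<not>cycle_adj 5 0 0" "\<not>cycle_adj 5 1 1" "\<not>cycle_adj 5 2 2" "\<not>cycle_adj 5 3 3" "\<not>cycle_adj 5 4 4"
  "\<not>cycle_adj 5 0 2" "\<not>cycle_adj 5 2 0" "\<not>cycle_adj 5 1 3" "\<not>cycle_adj 5 3 1"
  "\<not>cycle_adj 5 1 4" "\<not>cycle_adj 5 4 1" "\<not>cycle_adj 5 2 4" "\<not>cycle_adj 5 4 2"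
  "\<not>cycle_adj 5 0 3" "\<not>cycle_adj 5 3 0"
  by (auto simp: cycle_adj_def)

lemma noC5:
  fixes V :: "'a set"
  assumes sg: "simple_graph V E" and nc: "\<not> contains_induced V E {0..<5} (cycle_adj 5)"
  and F: "compl_adj V E v0 v1" "compl_adj V E v1 v2" "compl_adj V E v2 v3" "compl_adj V E v3 v4" "compl_adj V E v4 v0"
   "\<not> compl_adj V E v0 v2" "\<not> compl_adj V E v0 v3" "\<not> compl_adj V E v1 v3" "\<not> compl_adj V E v1 v4" "\<not> compl_adj V E v2 v4"
  and d: "distinct [v0,v2,v4,v1,v3]"
  shows False
proof -
  let ?xs = "[v0,v2,v4,v1,v3]"
  have V: "v0 \<in> V" "v1 \<in> V" "v2 \<in> V" "v3 \<in> V" "v4 \<in> V" using F F_V by metis+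
  have Fs: "compl_adj V E v1 v0" "compl_adj V E v2 v1" "compl_adj V E v3 v2" "compl_adj V E v4 v3" "compl_adj V E v0 v4"
    using F sg_sym[OF sg] by blast+
  have ns: "\<not> compl_adj V E v2 v0" "\<not> compl_adj V E v3 v0" "\<not> compl_adj V E v3 v1" "\<not> compl_adj V E v4 v1" "\<not> compl_adj V E v4 v2"
    using F sg_sym[OF sg] by blast+
  have bij: "bij_betw ((!) ?xs) {0..<5} (set ?xs)"
    by (rule bij_betw_nth[OF d]) auto
  have U: "{0..<5::nat} = {0,1,2,3,4}" by auto
  have "induced_iso E (set ?xs) {0..<5} (cycle_adj 5)"
    unfolding induced_iso_def
    apply (rule exI[of _ "(!) ?xs"])
    apply (rule conjI[OF bij])
    unfolding U
    using F Fs ns d V E_iff[OF sg] E_irr[OF sg] cyc5_tab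
    by (simp; metis)
  moreover have "set ?xs \<subseteq> V" using V by auto
  ultimately show False using nc unfolding contains_induced_def by blast
qed


locale ah =
  fixes V :: "'a set" and E and A and k :: nat and h :: "nat \<Rightarrow> 'a"
  assumes sg: "simple_graph V E"
  and nb: "\<not> contains_induced V E banner_V banner_adj"
  and nc: "\<not> contains_induced V E {0..<5} (cycle_adj 5)"
  and k5: "5 \<le> k" and ko: "odd k"
  and hA: "\<And>i. h i \<in> A" and Ah: "\<And>a. a \<in> A \<Longrightarrow> \<exists>i. a = h i"
  and hF: "\<And>i j. compl_adj V E (h i) (h j) \<longleftrightarrow> cycle_adj k (i mod k) (j mod k)"
  and heq: "\<And>i j. h i = h j \<longleftrightarrow> i mod k = j mod k"
  and tri: "\<forall>S. co_triangle V E S \<longrightarrow> card (S \<inter> A) < 2"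
begin

abbreviation F where "F \<equiv> compl_adj V E"

lemma Fsym: "F u v \<Longrightarrow> F v u" using sg_sym[OF sg] .

lemma modne: "a < b \<Longrightarrow> b < k \<Longrightarrow> (i+a) mod k \<noteq> (i+b) mod k"
proof
  assume ab: "a < b" "b < k" and e: "(i+a) mod k = (i+b) mod k"
  then have "k dvd (i+b) - (i+a)" using mod_eq_dvd_iff_nat[of "i+a" "i+b" k] by auto
  then have "k dvd b - a" by simp
  then show False using ab by (simp add: nat_dvd_not_less)
qed

lemma hne: "a < b \<Longrightarrow> b < k \<Longrightarrow> h (i+a) \<noteq> h (i+b)"
  using heq modne by blast

lemma h1: "F (h i) (h (i+1))"
proof -
  have "i mod k \<noteq> (i+1) mod k" using modne[of 0 1 i] k5 by simp
  moreover have "(i+1) mod k = (i mod k + 1) mod k" by (simp add: mod_simps)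
  moreover have "i mod k < k" "(i+1) mod k < k" using k5 by auto
  ultimately show ?thesis unfolding hF cycle_adj_def by metis
qed

lemma hnadj: assumes "2 \<le> d" "d \<le> 3" shows "\<not> F (h i) (h (i+d))"
proof -
  have a: "(i+1) mod k \<noteq> (i+d) mod k" using modne[of 1 d i] k5 assms by simp
  have b: "(i+0) mod k \<noteq> (i+(d+1)) mod k" using modne[of 0 "d+1" i] k5 assms by simp
  have c1: "(i+1) mod k = (i mod k + 1) mod k" by (simp add: mod_simps)
  have c2: "(i+(d+1)) mod k = ((i+d) mod k + 1) mod k" by (simp add: mod_simps)
  have b': "i mod k \<noteq> ((i+d) mod k + 1) mod k" using b c2 by (simp add: add.assoc)
  show ?thesis unfolding hF cycle_adj_def using a b' c1 by metis
qed

lemma tri2: "F p q \<Longrightarrow> F q r \<Longrightarrow> F p r \<Longrightarrow> p \<in> A \<Longrightarrow> q \<in> A \<Longrightarrow> False"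
proof -
  assume f: "F p q" "F q r" "F p r" "p \<in> A" "q \<in> A"
  have d: "p \<noteq> q" "q \<noteq> r" "p \<noteq> r" using f unfolding compl_adj_def by auto
  have s: "F q p" "F r q" "F r p" using f Fsym by blast+
  have "stable_set V E {p,q,r}" using f s E_irr[OF sg] unfolding stable_set_def compl_adj_def
    by blast
  moreover have "card {p,q,r} = 3" using d by auto
  ultimately have "card ({p,q,r} \<inter> A) < 2" using tri co_triangle_def by blast
  moreover have "{p,q} \<subseteq> {p,q,r} \<inter> A" using f by auto
  moreover have "card {p,q} = 2" using d by auto
  ultimately show False using card_mono[of "{p,q,r} \<inter> A" "{p,q}"] by (metis finite.emptyI finite.insertI finite_Int not_le)
qed


lemma hA_nin: "F (h i) x \<Longrightarrow> F (h i) y \<Longrightarrow> F x y \<Longrightarrow> x \<notin> A"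
  using tri2[of "h i" x y] hA by blast

lemma h1': "F (h (i+1)) (h (i+2))" "F (h (i+2)) (h (i+3))"
proof -
  have e: "i+1+1 = i+2" "i+2+1 = i+3" by simp_all
  show "F (h (i+1)) (h (i+2))" "F (h (i+2)) (h (i+3))"
    using h1[of "i+1"] h1[of "i+2"] unfolding e by auto
qed

lemma hnadj': "\<not> F (h (i+1)) (h (i+3))" "\<not> F (h (i+2)) (h i)" "\<not> F (h (i+3)) (h i)"
  "\<not> F (h i) (h (i+2))" "\<not> F (h i) (h (i+3))"
proof -
  have e: "i+1+2 = i+3" by simp
  show "\<not> F (h (i+1)) (h (i+3))" "\<not> F (h (i+2)) (h i)" "\<not> F (h (i+3)) (h i)"
  "\<not> F (h i) (h (i+2))" "\<not> F (h i) (h (i+3))"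
  using hnadj[of 2 "i+1"] hnadj[of 2 i] hnadj[of 3 i] Fsym unfolding e by auto
qed

lemma hdist: "h i \<noteq> h (i+1)" "h i \<noteq> h (i+2)" "h i \<noteq> h (i+3)" "h (i+1) \<noteq> h (i+2)"
  "h (i+1) \<noteq> h (i+3)" "h (i+2) \<noteq> h (i+3)"
  using hne[of 0 1 i] hne[of 0 2 i] hne[of 0 3 i] hne[of 1 2 i] hne[of 1 3 i] hne[of 2 3 i] k5
  by auto

lemma L0a:
  assumes t: "F (h i) x" "F (h i) y" "F x y" and b: "F (h (i+2)) x" shows "F (h (i+2)) y"
proof (rule ccontr)
  assume nby: "\<not> F (h (i+2)) y"
  have xA: "x \<notin> A" using hA_nin t by blast
  have yA: "y \<notin> A" using hA_nin[of i y x] t Fsym by blast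
  have n1y: "\<not> F (h (i+1)) y" using tri2[of "h i" "h (i+1)" y] h1 t hA by blast
  have ncx: "\<not> F (h (i+3)) x" using tri2[of "h (i+2)" "h (i+3)" x] h1' b hA by blast
  have "F (h (i+3)) y"
  proof (rule ccontr)
    assume "\<not> F (h (i+3)) y"
    then show False
      using cobanner[OF sg nb, of x "h i" y "h (i+2)" "h (i+3)"] t b nby ncx hnadj' h1' Fsym
        hA xA yA by metis
  qed
  then show False
    using noC5[OF sg nc, of "h (i+1)" "h (i+2)" "h (i+3)" y "h i"] h1 h1' t n1y nby hnadj' hdist hA yA Fsym
    by (metis distinct_length_2_or_more distinct_singleton)
qed

lemma L0:
  assumes t: "F (h i) x" "F (h i) y" "F x y" shows "F (h (i+2)) x \<and> F (h (i+2)) y"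
proof -
  have xA: "x \<notin> A" using hA_nin t by blast
  have yA: "y \<notin> A" using hA_nin[of i y x] t Fsym by blast
  have n1x: "\<not> F (h (i+1)) x" using tri2[of "h i" "h (i+1)" x] h1 t hA by blast
  have n1y: "\<not> F (h (i+1)) y" using tri2[of "h i" "h (i+1)" y] h1 t hA by blast
  have "F (h (i+2)) x \<or> F (h (i+2)) y"
  proof (rule ccontr)
    assume "\<not> (F (h (i+2)) x \<or> F (h (i+2)) y)"
    then show False
      using cobanner[OF sg nb, of "h i" x y "h (i+1)" "h (i+2)"] t n1x n1y h1 h1' hnadj' hA xA yA
      by metis
  qed
  then show ?thesis using L0a[OF t] L0a[of i y x] t Fsym by blast
qed


lemma NoT0:
  assumes t: "F (h i) x" "F (h i) y" "F x y" shows False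
proof -
  have P: "F (h (i+2*m)) x \<and> F (h (i+2*m)) y" for m
  proof (induction m)
    case 0 then show ?case using t by simp
  next
    case (Suc m)
    have e: "i + 2*Suc m = (i+2*m) + 2" by simp
    show ?case unfolding e using L0[of "i+2*m" x y] Suc t(3) by blast
  qed
  define j where "j = i + 2 * (k div 2)"
  have j: "j + 1 = i + k" using odd_two_times_div_two_nat[OF ko] k5 unfolding j_def by simp
  have "h (i+k) = h i" using heq by simp
  then have "F (h j) (h i)" using h1[of j] j by simp
  then show False using tri2[of "h j" "h i" x] P[of "k div 2"] t hA unfolding j_def by blast
qed

lemma notA: "F u v \<Longrightarrow> F u w \<Longrightarrow> F v w \<Longrightarrow> u \<notin> A"
  using NoT0 Ah by blast

lemma L1:
  assumes T: "F t w" "F t z" "F w z"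
  and a: "F (h i) t" "\<not> F (h i) w" "\<not> F (h i) z"
  and a1: "F (h (i+1)) w" "\<not> F (h (i+1)) t" "\<not> F (h (i+1)) z"
  shows "F (h (i+2)) t \<and> \<not> F (h (i+2)) w \<and> \<not> F (h (i+2)) z"
proof -
  have Ts: "F w t" "F z t" "F z w" using T Fsym by blast+
  have nA: "t \<notin> A" "w \<notin> A" "z \<notin> A" using notA T Ts by blast+
  have nbw: "\<not> F (h (i+2)) w" using notA[of "h (i+1)" "h (i+2)" w] h1' a1 hA by blast
  have nboth: "\<not> (F (h (i+2)) t \<and> F (h (i+2)) z)" using notA[of "h (i+2)" t z] T hA by blast
  have or: "F (h (i+2)) t \<or> F (h (i+2)) z"
  proof (rule ccontr)
    assume c: "\<not> (F (h (i+2)) t \<or> F (h (i+2)) z)"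
    have d: "h (i+1) \<noteq> t" "h (i+1) \<noteq> z" "h (i+2) \<noteq> w" "h (i+2) \<noteq> t" "h (i+2) \<noteq> z"
      using hA nA by metis+
    have c1: "\<not> F (h (i+2)) t" and c2: "\<not> F (h (i+2)) z" using c by auto
    show False
      by (rule cobanner[OF sg nb Ts(1) T(3) T(2) Fsym[OF a1(1)] a1(2) a1(3) d(1) d(2) h1'(1) nbw c1 c2 d(3) d(4) d(5)])
  qed
  have "\<not> F (h (i+2)) z"
  proof
    assume bz: "F (h (i+2)) z"
    then have nbt: "\<not> F (h (i+2)) t" using nboth by blast
    show False
      apply (rule noC5[OF sg nc, of "h i" "h (i+1)" "h (i+2)" z t])
      using h1 h1' bz Ts a a1 nbt hnadj' Fsym apply blast+
      using hdist[of i] hA[of i] hA[of "i+1"] hA[of "i+2"] nA T(2) unfolding compl_adj_def by auto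
  qed
  then show ?thesis using or nbw by blast
qed


lemma L1case':
  assumes T: "F t w" "F t z" "F w z" and a: "F (h i) t" and b: "F (h (i+1)) w"
  shows False
proof -
  have Ts: "F w t" "F z t" "F z w" using T Fsym by blast+
  have onlyt: "F (h j) t \<Longrightarrow> \<not> F (h j) w \<and> \<not> F (h j) z" for j
    using notA[of "h j" t w] notA[of "h j" t z] T hA by blast
  have onlyw: "F (h j) w \<Longrightarrow> \<not> F (h j) t \<and> \<not> F (h j) z" for j
    using notA[of "h j" w t] notA[of "h j" w z] Ts T hA by blast
  have Q: "F (h (i+2*m)) t \<and> F (h (i+2*m+1)) w" for m
  proof (induction m)
    case 0 then show ?case using a b by simp
  next
    case (Suc m)
    let ?j = "i+2*m"
    have e1: "i + 2*Suc m = ?j + 2" and e2: "i + 2*Suc m + 1 = (?j + 1) + 2" and e3: "?j+1+1 = ?j+2"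
      by simp_all
    have s1: "F (h (?j+2)) t" using L1[OF T, of ?j] Suc onlyt onlyw by blast
    have s1': "F (h (?j+1+1)) t" using s1 unfolding e3 .
    have s2: "F (h (?j+1+2)) w" using L1[OF Ts(1) T(3) T(2), of "?j+1"] Suc s1' onlyt onlyw by blast
    show ?case unfolding e1 e2 using s1 s2 by simp
  qed
  define j where "j = i + 2 * (k div 2)"
  have j: "j + 1 = i + k" using odd_two_times_div_two_nat[OF ko] k5 unfolding j_def by simp
  have "h (i+k) = h i" using heq by simp
  then have "F (h (j+1)) t" using a j by simp
  moreover have "F (h j) t" using Q[of "k div 2"] unfolding j_def by blast
  ultimately show False using notA[of "h j" "h (j+1)" t] h1[of j] hA by blast
qed

lemma L1case:
  assumes T: "F t x" "F t y" "F x y" and a: "F t a" "a \<in> A"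
  shows False
proof -
  obtain i where i: "a = h i" using Ah a by blast
  have Ts: "F x t" "F y t" "F y x" using T Fsym by blast+
  have nA: "t \<notin> A" "x \<notin> A" "y \<notin> A" using notA T Ts by blast+
  have ai: "F (h i) t" using a i Fsym by blast
  have n0: "\<not> F (h i) x" "\<not> F (h i) y" using notA[of "h i" t x] notA[of "h i" t y] ai T hA by blast+
  have n1t: "\<not> F (h (i+1)) t" using notA[of "h i" "h (i+1)" t] ai h1 hA by blast
  have d: "h i \<noteq> x" "h i \<noteq> y" "h (i+1) \<noteq> t" "h (i+1) \<noteq> x" "h (i+1) \<noteq> y"
    using hA nA by metis+
  have "F (h (i+1)) x \<or> F (h (i+1)) y"
  proof (rule ccontr)
    assume c: "\<not> (F (h (i+1)) x \<or> F (h (i+1)) y)"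
    have c1: "\<not> F (h (i+1)) x" and c2: "\<not> F (h (i+1)) y" using c by auto
    show False
      by (rule cobanner[OF sg nb T(1) T(2) T(3) Fsym[OF ai] n0(1) n0(2) d(1) d(2) h1 n1t c1 c2 d(3) d(4) d(5)])
  qed
  then show False using L1case'[OF T(1) T(2) T(3) ai] L1case'[OF T(2) T(1) Ts(3) ai] by blast
qed

lemma main:
  "F t x \<Longrightarrow> F t y \<Longrightarrow> F x y \<Longrightarrow> a \<in> A \<Longrightarrow> (F ^^ n) t a \<Longrightarrow> False"
proof (induction n arbitrary: t x y rule: less_induct)
  case (less n)
  show False
  proof (cases n)
    case 0
    then show False using less.prems notA by auto
  next
    case (Suc n1)
    show False
    proof (cases n1)
      case 0
      then show False using less.prems Suc L1case by auto
    next
      case (Suc m)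
      obtain t1 where t1: "F t t1" "(F ^^ Suc m) t1 a"
        using relpowp_Suc_D2[where P=F and n=n1 and x=t and z=a] less.prems(5) \<open>n = Suc n1\<close> Suc by auto
      obtain t2 where t2: "F t1 t2" "(F ^^ m) t2 a"
        using relpowp_Suc_D2[OF t1(2)] by auto
      have lt1: "Suc m < n" and lt2: "m < n" using \<open>n = Suc n1\<close> Suc by auto
      have T: "F t x" "F t y" "F x y" using less.prems by auto
      have Ts: "F x t" "F y t" "F y x" using T Fsym by blast+
      have pm: "(F ^^ Suc m) x a \<Longrightarrow> False" "(F ^^ Suc m) y a \<Longrightarrow> False" "(F ^^ Suc m) t a \<Longrightarrow> False"
        using less.IH[OF lt1, of x t y] less.IH[OF lt1, of y t x] less.IH[OF lt1, of t x y] T Ts less.prems(4)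
        by blast+
      have pm0: "(F ^^ m) x a \<Longrightarrow> False" "(F ^^ m) y a \<Longrightarrow> False" "(F ^^ m) t a \<Longrightarrow> False"
        using less.IH[OF lt2, of x t y] less.IH[OF lt2, of y t x] less.IH[OF lt2, of t x y] T Ts less.prems(4)
        by blast+
      have t1x: "\<not> F t1 x"
        using less.IH[OF lt1, of t1 t x] t1 T Fsym less.prems(4) by blast
      have t1y: "\<not> F t1 y"
        using less.IH[OF lt1, of t1 t y] t1 T Fsym less.prems(4) by blast
      have t1d: "t1 \<noteq> x" "t1 \<noteq> y" using pm t1 by auto
      have t2n: "\<not> F t2 t" "\<not> F t2 x" "\<not> F t2 y"
        using pm t2 Fsym relpowp_Suc_I2[where P=F and y=t2 and n=m and z=a] by blast+
      have t2d: "t2 \<noteq> t" "t2 \<noteq> x" "t2 \<noteq> y" using pm0 t2 by auto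
      show False
        by (rule cobanner[OF sg nb T(1) T(2) T(3) t1(1) t1x t1y t1d(1) t1d(2) t2(1) t2n t2d])
    qed
  qed
qed

end


theorem lemma2:
  fixes V :: "'a set" and E :: "'a \<Rightarrow> 'a \<Rightarrow> bool" and A :: "'a set"
  assumes "simple_graph V E"
    and "\<not> contains_induced V E banner_V banner_adj"
    and "\<not> contains_induced V E {0..<5} (cycle_adj 5)"
    and "odd_antihole V E A"
    and "stability_number V E \<ge> 3"
    and "\<forall>S. co_triangle V E S \<longrightarrow> card (S \<inter> A) < 2"
  shows "\<exists>C. conn_component V (compl_adj V E) C \<and> A \<subseteq> C \<and> triangle_free_on (compl_adj V E) C"
proof -
  note sg = assms(1)
  obtain k f where AV: "A \<subseteq> V" and ko: "odd k" and k5: "k \<ge> 5" and bij: "bij_betw f {0..<k} A"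
    and iso: "\<forall>x\<in>{0..<k}. \<forall>y\<in>{0..<k}. E (f x) (f y) \<longleftrightarrow> anticycle_adj k x y"
    using assms(4) unfolding odd_antihole_def induced_iso_def by blast
  define h where "h i = f (i mod k)" for i
  have kp: "0 < k" using k5 by simp
  have hA: "h i \<in> A" for i using bij_betw_apply[OF bij] kp unfolding h_def by simp
  have Ah: "\<exists>i. a = h i" if "a \<in> A" for a
  proof -
    have "a \<in> f ` {0..<k}" using bij that by (simp add: bij_betw_def)
    then obtain j where "j < k" "a = f j" by auto
    then show ?thesis unfolding h_def by (metis mod_less)
  qed
  have inj: "inj_on f {0..<k}" using bij bij_betw_def by blast
  have heq: "h i = h j \<longleftrightarrow> i mod k = j mod k" for i j
  proof
    assume "h i = h j"
    then have "f (i mod k) = f (j mod k)" unfolding h_def .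
    then show "i mod k = j mod k" by (rule inj_onD[OF inj]) (use kp in auto)
  qed (simp add: h_def)
  have hF: "compl_adj V E (h i) (h j) \<longleftrightarrow> cycle_adj k (i mod k) (j mod k)" for i j
  proof -
    have p: "i mod k < k" "j mod k < k" using kp by auto
    have V: "h i \<in> V" "h j \<in> V" using hA AV by auto
    have e: "E (h i) (h j) \<longleftrightarrow> anticycle_adj k (i mod k) (j mod k)"
      using iso p unfolding h_def by auto
    have c: "cycle_adj k (i mod k) (j mod k) \<Longrightarrow> i mod k \<noteq> j mod k" by (simp add: cycle_adj_def)
    show ?thesis
    proof (cases "i mod k = j mod k")
      case True
      then show ?thesis using heq[of i j] c by (auto simp add: compl_adj_def)
    next
      case False
      then have "h i \<noteq> h j" using heq by blast
      then show ?thesis unfolding compl_adj_def e anticycle_adj_def using V p False by simp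
    qed
  qed
  interpret ah V E A k h
    apply unfold_locales
    using sg assms(2,3,6) k5 ko hA Ah hF heq by blast+
  have R: "(\<lambda>u v. compl_adj V E u v \<and> u \<in> V \<and> v \<in> V) = compl_adj V E"
    by (auto simp: compl_adj_def fun_eq_iff)
  define C where "C = {y \<in> V. (compl_adj V E)\<^sup>*\<^sup>* (h 0) y}"
  have h0V: "h 0 \<in> V" using hA AV by auto
  have cc: "conn_component V (compl_adj V E) C"
    unfolding conn_component_def R C_def using h0V by blast
  have reach: "(compl_adj V E)\<^sup>*\<^sup>* (h 0) (h j)" for j
  proof (induction j)
    case 0 then show ?case by simp
  next
    case (Suc j) then show ?case using h1[of j] by (simp add: rtranclp.rtrancl_into_rtrancl)
  qed
  have AC: "A \<subseteq> C"
  proof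
    fix a assume "a \<in> A"
    then obtain i where "a = h i" using Ah by blast
    then show "a \<in> C" unfolding C_def using reach hA AV by auto
  qed
  have sym: "symp (compl_adj V E)" using Fsym by (auto intro: sympI)
  have tf: "triangle_free_on (compl_adj V E) C"
    unfolding triangle_free_on_def
  proof clarify
    fix x y z assume xyz: "x \<in> C" "y \<in> C" "z \<in> C" "compl_adj V E x y" "compl_adj V E y z" "compl_adj V E x z"
    have "(compl_adj V E)\<^sup>*\<^sup>* (h 0) x" using xyz C_def by blast
    then have "(compl_adj V E)\<^sup>*\<^sup>* x (h 0)" using sym symp_rtranclp sympD by metis
    then obtain n where "(compl_adj V E ^^ n) x (h 0)" using rtranclp_imp_relpowp by metis
    then show False using main[of x y z "h 0" n] xyz hA by blast
  qed
  show ?thesis using cc AC tf by blast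
qed

end
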